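(* Let $U\in\mathbb{R}^{d\times n}$ be a frame with $n\ge2$, $z\in\mathbb{R}^n_{++}$, and $c\in\mathbb{R}^n_+$ with $\langle c,1_n\rangle=d$. Order the indices so that $x:=\mathrm{lev}^U(z)-c$ is non-decreasing, and let $T$ be a prefix set $\{1,\dots,k\}$, $1\le k\le n-1$, with largest margin $\gamma$ among such prefix sets. Then \[\gamma^2\ge\frac{1}{2n^3}\|\mathrm{lev}^U(z)-c\|_2^2.\]
   Context: A frame is a full row rank matrix $U=(u_1,\dots,u_n)\in\mathbb{R}^{d\times n}$; $Z=\mathrm{diag}(z)$; $\mathrm{lev}^U_j(z):=z_ju_j^{\mathsf T}(UZU^{\mathsf T})^{-1}u_j$. The margin of $T\subseteq[n]$ is the largest $\gamma\ge0$ for which there is $\nu\in\mathbb{R}$ with $\max_{j\in T}(\mathrm{lev}^U_j(z)-c_j)\le\nu-\gamma\le\nu+\gamma\le\min_{j\notin T}(\mathrm{lev}^U_j(z)-c_j)$. *)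

theory Defs
  imports "HOL-Analysis.Analysis"
begin

definition is_frame :: "real^'n^'d \<Rightarrow> bool" where
  "is_frame U \<longleftrightarrow> rank U = CARD('d)"

definition diagm :: "real^'n \<Rightarrow> real^'n^'n" where
  "diagm z = (\<chi> i j. if i = j then z $ i else 0)"

definition lev :: "real^'n^'d \<Rightarrow> real^'n \<Rightarrow> real^'n" where
  "lev U z = (\<chi> j. z $ j * (column j U \<bullet>
      (matrix_inv (U ** diagm z ** transpose U) *v column j U)))"

definition margin :: "real^'n \<Rightarrow> 'n set \<Rightarrow> real" where
  "margin x T = (GREATEST \<gamma>. \<gamma> \<ge> 0 \<and> (\<exists>\<nu>.
      (\<forall>j\<in>T. x $ j \<le> \<nu> - \<gamma>) \<and> \<nu> - \<gamma> \<le> \<nu> + \<gamma> \<and>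
      (\<forall>j\<in>- T. \<nu> + \<gamma> \<le> x $ j)))"

end

theory Submission
  imports Defs
begin

lemma diagm_mult: "diagm z *v w = (\<chi> j. z $ j * w $ j)"
proof -
  have "\<And>i. (\<Sum>j\<in>UNIV. (if i = j then z $ i else 0) * w $ j) = z $ i * w $ i"
  proof -
    fix i
    have "(\<Sum>j\<in>UNIV. (if i = j then z $ i else 0) * w $ j) = (\<Sum>j\<in>UNIV. if i = j then z $ i * w $ j else 0)"
      by (rule sum.cong) auto
    then show "(\<Sum>j\<in>UNIV. (if i = j then z $ i else 0) * w $ j) = z $ i * w $ i" by simp
  qed
  then show ?thesis unfolding diagm_def matrix_vector_mult_def by (simp add: vec_eq_iff)
qed

lemma quad_form:
  fixes U :: "real^'n^'d" and z :: "real^'n" and v :: "real^'d"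
  shows "v \<bullet> ((U ** diagm z ** transpose U) *v v) = (\<Sum>j\<in>UNIV. z $ j * ((transpose U *v v) $ j)^2)"
proof -
  have "v \<bullet> ((U ** diagm z ** transpose U) *v v) = v \<bullet> (U *v (diagm z *v (transpose U *v v)))"
    by (metis matrix_vector_mul_assoc)
  also have "\<dots> = (transpose U *v v) \<bullet> (diagm z *v (transpose U *v v))"
    by (simp add: dot_lmul_matrix[symmetric] transpose_matrix_vector)
  also have "\<dots> = (\<Sum>j\<in>UNIV. z $ j * ((transpose U *v v) $ j)^2)"
    unfolding inner_vec_def diagm_mult
    by (auto simp: power2_eq_square intro!: sum.cong)
  finally show ?thesis .
qed

lemma gram_inv:
  fixes U :: "real^'n^'d" and z :: "real^'n"
  assumes frame: "is_frame U" and zpos: "\<forall>j. z $ j > 0"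
  shows "matrix_inv (U ** diagm z ** transpose U) ** (U ** diagm z ** transpose U) = mat 1"
proof -
  let ?A = "U ** diagm z ** transpose U"
  have "\<forall>v. ?A *v v = 0 \<longrightarrow> v = 0"
  proof (intro allI impI)
    fix v assume "?A *v v = 0"
    then have "(\<Sum>j\<in>UNIV. z $ j * ((transpose U *v v) $ j)^2) = 0"
      using quad_form[of v U z] by simp
    moreover have "\<forall>j\<in>UNIV. 0 \<le> z $ j * ((transpose U *v v) $ j)^2"
      using zpos by (simp add: less_imp_le)
    ultimately have "\<forall>j\<in>UNIV. z $ j * ((transpose U *v v) $ j)^2 = 0"
      using sum_nonneg_eq_0_iff[of UNIV "\<lambda>j. z $ j * ((transpose U *v v) $ j)^2"] by simp
    then have "transpose U *v v = 0"
      using zpos by (auto simp: vec_eq_iff) (metis less_irrefl)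
    moreover have "rank (transpose U) = CARD('d)"
      using frame by (simp add: is_frame_def rank_transpose)
    ultimately show "v = 0"
      using matrix_nonfull_linear_equations_eq[of "transpose U"] by blast
  qed
  then obtain B where "B ** ?A = mat 1" using matrix_left_invertible_ker by blast
  then have "invertible ?A" using invertible_left_inverse by blast
  then have "\<exists>A'. ?A ** A' = mat 1 \<and> A' ** ?A = mat 1" by (simp add: invertible_def)
  then show ?thesis unfolding matrix_inv_def by (rule someI2_ex) simp
qed

lemma gram_entry:
  fixes U :: "real^'n^'d" and z :: "real^'n"
  shows "(U ** diagm z ** transpose U) $ b $ a = (\<Sum>j\<in>UNIV. U $ b $ j * z $ j * U $ a $ j)"
proof -
  have "(U ** diagm z) $ b $ j = U $ b $ j * z $ j" for j
  proof -
    have "(U ** diagm z) $ b $ j = (\<Sum>k\<in>UNIV. U $ b $ k * (if k = j then z $ k else 0))"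
      unfolding matrix_matrix_mult_def diagm_def by simp
    also have "\<dots> = (\<Sum>k\<in>UNIV. if k = j then U $ b $ k * z $ k else 0)"
      by (rule sum.cong) auto
    finally show ?thesis by simp
  qed
  then show ?thesis unfolding matrix_matrix_mult_def[of "U ** diagm z"] transpose_def by simp
qed

lemma lev_sum:
  fixes U :: "real^'n^'d" and z :: "real^'n"
  assumes frame: "is_frame U" and zpos: "\<forall>j. z $ j > 0"
  shows "(\<Sum>j\<in>UNIV. lev U z $ j) = real CARD('d)"
proof -
  define A where "A = U ** diagm z ** transpose U"
  define B where "B = matrix_inv A"
  have BA: "B ** A = mat 1" unfolding A_def B_def using gram_inv[OF frame zpos] .
  have "(\<Sum>j\<in>UNIV. lev U z $ j) =
     (\<Sum>j\<in>UNIV. z $ j * (\<Sum>a\<in>UNIV. U $ a $ j * (\<Sum>b\<in>UNIV. B $ a $ b * U $ b $ j)))"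
    unfolding lev_def B_def A_def by (simp add: inner_vec_def matrix_vector_mult_def column_def)
  also have "\<dots> = (\<Sum>j\<in>UNIV. \<Sum>a\<in>UNIV. \<Sum>b\<in>UNIV. B $ a $ b * (U $ b $ j * z $ j * U $ a $ j))"
    by (simp add: sum_distrib_left mult_ac)
  also have "\<dots> = (\<Sum>a\<in>UNIV. \<Sum>j\<in>UNIV. \<Sum>b\<in>UNIV. B $ a $ b * (U $ b $ j * z $ j * U $ a $ j))"
    by (rule sum.swap)
  also have "\<dots> = (\<Sum>a\<in>UNIV. \<Sum>b\<in>UNIV. \<Sum>j\<in>UNIV. B $ a $ b * (U $ b $ j * z $ j * U $ a $ j))"
    by (rule sum.cong[OF refl], rule sum.swap)
  also have "\<dots> = (\<Sum>a\<in>UNIV. \<Sum>b\<in>UNIV. B $ a $ b * A $ b $ a)"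
    unfolding A_def gram_entry by (simp add: sum_distrib_left)
  also have "\<dots> = (\<Sum>a\<in>(UNIV::'d set). (B ** A) $ a $ a)"
    by (simp add: matrix_matrix_mult_def)
  also have "\<dots> = real CARD('d)" using BA by (simp add: mat_def)
  finally show ?thesis .
qed

lemma margin_prefix:
  fixes x :: "real^'n" and \<sigma> :: "nat \<Rightarrow> 'n"
  assumes bij: "bij_betw \<sigma> {0..<CARD('n)} UNIV"
    and sorted: "\<forall>i l. i \<le> l \<and> l < CARD('n) \<longrightarrow> x $ \<sigma> i \<le> x $ \<sigma> l"
    and k1: "1 \<le> k" and k2: "k \<le> CARD('n) - 1"
  shows "margin x (\<sigma> ` {0..<k}) = (x $ \<sigma> k - x $ \<sigma> (k - 1)) / 2"
proof -
  let ?T = "\<sigma> ` {0..<k}"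
  let ?g = "(x $ \<sigma> k - x $ \<sigma> (k - 1)) / 2"
  have kn: "k < CARD('n)" using k2 k1 by linarith
  have inT: "\<sigma> (k - 1) \<in> ?T" using k1 by auto
  have notT: "\<sigma> k \<notin> ?T"
  proof
    assume "\<sigma> k \<in> ?T"
    then obtain i where i: "i < k" "\<sigma> i = \<sigma> k" by auto
    have "inj_on \<sigma> {0..<CARD('n)}" using bij by (simp add: bij_betw_def)
    then have "i = k" using i kn by (auto dest: inj_onD)
    then show False using i by simp
  qed
  have T1: "x $ j \<le> x $ \<sigma> (k - 1)" if jT: "j \<in> ?T" for j
  proof -
    obtain i where "i < k" "j = \<sigma> i" using jT by auto
    moreover have "i \<le> k - 1" "k - 1 < CARD('n)" using \<open>i < k\<close> kn by auto
    ultimately show ?thesis using sorted by blast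
  qed
  have T2: "x $ \<sigma> k \<le> x $ j" if jT: "j \<notin> ?T" for j
  proof -
    obtain i where i: "i < CARD('n)" "j = \<sigma> i" using bij unfolding bij_betw_def
      by (metis UNIV_I atLeastLessThan_iff imageE)
    have "k \<le> i" using jT i by (metis atLeastLessThan_iff image_eqI not_le zero_le)
    then show ?thesis using sorted i by auto
  qed
  have g0: "?g \<ge> 0" using sorted kn by auto
  show ?thesis unfolding margin_def
  proof (rule Greatest_equality)
    show "?g \<ge> 0 \<and> (\<exists>\<nu>. (\<forall>j\<in>?T. x $ j \<le> \<nu> - ?g) \<and> \<nu> - ?g \<le> \<nu> + ?g \<and>
      (\<forall>j\<in>- ?T. \<nu> + ?g \<le> x $ j))"
    proof (intro conjI exI[of _ "(x $ \<sigma> k + x $ \<sigma> (k - 1)) / 2"] ballI)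
      fix j assume "j \<in> ?T"
      then have "x $ j \<le> x $ \<sigma> (k - 1)" using T1 by blast
      then show "x $ j \<le> (x $ \<sigma> k + x $ \<sigma> (k - 1)) / 2 - ?g" by (simp add: field_simps)
    next
      fix j assume "j \<in> - ?T"
      then have "x $ \<sigma> k \<le> x $ j" using T2 by blast
      then show "(x $ \<sigma> k + x $ \<sigma> (k - 1)) / 2 + ?g \<le> x $ j" by (simp add: field_simps)
    qed (use g0 in \<open>auto simp: field_simps\<close>)
  next
    fix y assume "y \<ge> 0 \<and> (\<exists>\<nu>. (\<forall>j\<in>?T. x $ j \<le> \<nu> - y) \<and> \<nu> - y \<le> \<nu> + y \<and>
      (\<forall>j\<in>- ?T. \<nu> + y \<le> x $ j))"
    then obtain \<nu> where "x $ \<sigma> (k - 1) \<le> \<nu> - y" "\<nu> + y \<le> x $ \<sigma> k"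
      using inT notT by blast
    then show "y \<le> ?g" by (simp add: field_simps)
  qed
qed

theorem proposition2p6:
  fixes U :: "real^'n^'d" and z c :: "real^'n"
    and \<sigma> :: "nat \<Rightarrow> 'n" and k :: nat
  assumes frame: "is_frame U"
    and n2: "CARD('n) \<ge> 2"
    and zpos: "\<forall>j. z $ j > 0"
    and cnonneg: "\<forall>j. c $ j \<ge> 0"
    and csum: "(\<Sum>j\<in>UNIV. c $ j) = real CARD('d)"
    and \<sigma>bij: "bij_betw \<sigma> {0..<CARD('n)} UNIV"
    and sorted: "\<forall>i l. i \<le> l \<and> l < CARD('n) \<longrightarrow>
                   (lev U z - c) $ \<sigma> i \<le> (lev U z - c) $ \<sigma> l"
    and krange: "1 \<le> k" "k \<le> CARD('n) - 1"
    and kbest: "\<forall>k'. 1 \<le> k' \<and> k' \<le> CARD('n) - 1 \<longrightarrow>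
                   margin (lev U z - c) (\<sigma> ` {0..<k'}) \<le> margin (lev U z - c) (\<sigma> ` {0..<k})"
  shows "(margin (lev U z - c) (\<sigma> ` {0..<k}))\<^sup>2
           \<ge> 1 / (2 * real CARD('n) ^ 3) * (norm (lev U z - c))\<^sup>2"
proof -
  define x where "x = lev U z - c"
  define n where "n = CARD('n)"
  define \<gamma> where "\<gamma> = margin x (\<sigma> ` {0..<k})"
  have sx: "\<forall>i l. i \<le> l \<and> l < CARD('n) \<longrightarrow> x $ \<sigma> i \<le> x $ \<sigma> l"
    using sorted unfolding x_def .
  have sumx: "(\<Sum>j\<in>UNIV. x $ j) = 0"
    unfolding x_def using lev_sum[OF frame zpos] csum by (simp add: sum_subtractf)
  have gap: "x $ \<sigma> k' - x $ \<sigma> (k' - 1) \<le> 2 * \<gamma>" if "1 \<le> k'" "k' \<le> n - 1" for k'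
  proof -
    have "margin x (\<sigma> ` {0..<k'}) \<le> \<gamma>" using kbest that unfolding x_def \<gamma>_def n_def by blast
    moreover have "margin x (\<sigma> ` {0..<k'}) = (x $ \<sigma> k' - x $ \<sigma> (k' - 1)) / 2"
      using margin_prefix[OF \<sigma>bij sx] that unfolding n_def by blast
    ultimately show ?thesis by simp
  qed
  have g0: "\<gamma> \<ge> 0"
  proof -
    have "\<gamma> = (x $ \<sigma> k - x $ \<sigma> (k - 1)) / 2"
      using margin_prefix[OF \<sigma>bij sx krange] unfolding \<gamma>_def .
    moreover have "x $ \<sigma> (k - 1) \<le> x $ \<sigma> k" using sx krange n2 by auto
    ultimately show ?thesis by simp
  qed
  have tele: "m < n \<Longrightarrow> x $ \<sigma> m - x $ \<sigma> 0 \<le> real m * (2 * \<gamma>)" for m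
  proof (induction m)
    case 0 then show ?case by simp
  next
    case (Suc m)
    then have "x $ \<sigma> m - x $ \<sigma> 0 \<le> real m * (2 * \<gamma>)" by simp
    moreover have "x $ \<sigma> (Suc m) - x $ \<sigma> (Suc m - 1) \<le> 2 * \<gamma>"
      using gap[of "Suc m"] Suc.prems by simp
    ultimately show ?case by (simp add: algebra_simps)
  qed
  define m0 where "m0 = x $ \<sigma> 0"
  define M where "M = x $ \<sigma> (n - 1)"
  have n1: "n - 1 < n" using n2 unfolding n_def by simp
  have R: "M - m0 \<le> real (n - 1) * (2 * \<gamma>)" using tele[OF n1] unfolding M_def m0_def .
  have bnd: "m0 \<le> x $ j \<and> x $ j \<le> M" for j
  proof -
    obtain i where i: "i < n" "j = \<sigma> i" using \<sigma>bij unfolding bij_betw_def n_def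
      by (metis UNIV_I atLeastLessThan_iff imageE)
    then show ?thesis unfolding m0_def M_def using sx unfolding n_def by auto
  qed
  have "0 \<le> (\<Sum>j\<in>UNIV. (x $ j - m0) * (M - x $ j))"
    using bnd by (intro sum_nonneg mult_nonneg_nonneg) auto
  also have "(\<Sum>j\<in>UNIV. (x $ j - m0) * (M - x $ j)) =
      (M + m0) * (\<Sum>j\<in>UNIV. x $ j) - (\<Sum>j\<in>UNIV. (x $ j)^2) - real n * (m0 * M)"
    by (simp add: algebra_simps power2_eq_square sum.distrib sum_subtractf sum_distrib_left n_def)
  finally have sq: "(\<Sum>j\<in>UNIV. (x $ j)^2) \<le> - real n * (m0 * M)" using sumx by simp
  have nrm: "(norm x)^2 = (\<Sum>j\<in>UNIV. (x $ j)^2)"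
  proof -
    have "(norm x)^2 = x \<bullet> x" by (rule power2_norm_eq_inner)
    then show ?thesis by (simp add: inner_vec_def power2_eq_square)
  qed
  have "- (m0 * M) \<le> (M - m0)^2 / 4"
    using zero_le_power2[of "M + m0"] by (simp add: power2_eq_square algebra_simps)
  moreover have "m0 \<le> M" using bnd[of "\<sigma> 0"] unfolding m0_def by simp
  then have "(M - m0)^2 \<le> (real (n - 1) * (2 * \<gamma>))^2"
    using R by (intro power_mono) auto
  ultimately have "- (m0 * M) \<le> (real (n - 1) * (2 * \<gamma>))^2 / 4" by linarith
  also have "\<dots> = real (n - 1) ^ 2 * \<gamma>^2" by (simp add: power_mult_distrib)
  also have "\<dots> \<le> real n ^ 2 * \<gamma>^2"
    by (intro mult_right_mono power_mono) auto
  finally have "- (m0 * M) \<le> real n ^ 2 * \<gamma>^2" .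
  then have "real n * (- (m0 * M)) \<le> real n * (real n ^ 2 * \<gamma>^2)"
    by (intro mult_left_mono) auto
  then have "(norm x)^2 \<le> real n ^ 3 * \<gamma>^2"
    using sq nrm by (simp add: power3_eq_cube power2_eq_square algebra_simps)
  also have "\<dots> \<le> 2 * real n ^ 3 * \<gamma>^2" by simp
  finally have "(norm x)^2 \<le> 2 * real n ^ 3 * \<gamma>^2" .
  moreover have "real n > 0" using n2 unfolding n_def by simp
  ultimately have "1 / (2 * real n ^ 3) * (norm x)^2 \<le> \<gamma>^2"
    by (simp add: field_simps)
  then show ?thesis unfolding x_def \<gamma>_def n_def .
qed

end
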